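(* Let $k>0$, $l\ge0$, $\epsilon_r>0$, and define the mass-spring energy $p:\mathbb{R}^3\to\mathbb{R}$, $p(d)=\frac k2\big(\sqrt{d^Td+\epsilon_r}-l\big)^2$. Then $p\ge0$, $p$ is twice differentiable with locally Lipschitz second derivatives, and $p$ is $L$-curvature bounded for a constant $L$ depending only on $k,l,\epsilon_r$ (in particular independent of any relaxation parameter $L_2$); hence taking the relaxation $\bar p=p$ gives $\bar p=p$ whenever $\bar p\le L_2$.
   Context: A function $\phi$ is $L$-curvature bounded if $\phi(x)+\frac L2\|x\|^2$ is convex and $\nabla\phi$ is $L$-Lipschitz. In applications $d$ is an edge vector depending linearly on the configuration. *)

theory Defs
  imports "HOL-Analysis.Analysis"
begin

definition mass_spring :: "real \<Rightarrow> real \<Rightarrow> real \<Rightarrow> real^3 \<Rightarrow> real" where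
  "mass_spring k l eps d = k / 2 * (sqrt (d \<bullet> d + eps) - l)\<^sup>2"

definition curvature_bounded :: "real \<Rightarrow> ('a::euclidean_space \<Rightarrow> real) \<Rightarrow> bool" where
  "curvature_bounded L phi \<longleftrightarrow>
     convex_on UNIV (\<lambda>x. phi x + L / 2 * (norm x)\<^sup>2) \<and>
     (\<exists>G. (\<forall>x. (phi has_derivative (\<lambda>h. G x \<bullet> h)) (at x)) \<and> L-lipschitz_on UNIV G)"

definition C2_loclip :: "('a::euclidean_space \<Rightarrow> real) \<Rightarrow> bool" where
  "C2_loclip phi \<longleftrightarrow>
     (\<exists>G H. (\<forall>x. (phi has_derivative (\<lambda>h. G x \<bullet> h)) (at x)) \<and>
            (\<forall>x. (G has_derivative blinfun_apply (H x)) (at x)) \<and>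
            (\<forall>x. \<exists>e>0. \<exists>C. C-lipschitz_on (ball x e) H))"

end

theory Submission imports Defs begin

lemma convex_lip_grad:
  fixes f :: "'a::real_inner \<Rightarrow> real"
  assumes der: "\<And>x. (f has_derivative (\<lambda>h. G x \<bullet> h)) (at x)" and lip: "L-lipschitz_on UNIV G"
  shows "convex_on UNIV (\<lambda>x. f x + L/2 * (norm x)\<^sup>2)"
proof (rule convex_onI)
  fix t :: real and x y :: 'a assume t: "0<t" "t<1"
  define z where "z s = x + s *\<^sub>R (y - x)" for s
  define g where "g s = f (z s) + L/2 * (z s \<bullet> z s)" for s
  define g' where "g' s = G (z s) \<bullet> (y-x) + L * (z s \<bullet> (y-x))" for s
  have zd: "(z has_derivative (\<lambda>r. r *\<^sub>R (y-x))) (at s)" for s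
    unfolding z_def by (auto intro!: derivative_eq_intros)
  have gd: "(g has_real_derivative g' s) (at s)" for s
  proof -
    have c: "((\<lambda>s. f (z s)) has_derivative (\<lambda>r. G (z s) \<bullet> (r *\<^sub>R (y-x)))) (at s)"
      using has_derivative_compose[OF zd der] by (simp add: o_def)
    note d2 = has_derivative_inner[OF zd zd]
    have "(g has_derivative (\<lambda>r. G (z s) \<bullet> (r *\<^sub>R (y-x)) + L/2 * (z s \<bullet> r *\<^sub>R (y - x) + r *\<^sub>R (y - x) \<bullet> z s))) (at s)"
      unfolding g_def by (intro has_derivative_add c has_derivative_mult_right d2)
    then show ?thesis unfolding has_field_derivative_def
      by (rule has_derivative_eq_rhs) (auto simp: g'_def algebra_simps inner_commute)
  qed
  have mono: "g' s1 \<le> g' s2" if "s1 \<le> s2" for s1 s2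
  proof -
    have "norm (G (z s2) - G (z s1)) \<le> L * norm (z s2 - z s1)"
      using lipschitz_on_normD[OF lip] by auto
    also have "z s2 - z s1 = (s2 - s1) *\<^sub>R (y - x)" by (simp add: z_def algebra_simps)
    finally have n: "norm (G (z s2) - G (z s1)) \<le> L * ((s2 - s1) * norm (y - x))"
      using that by simp
    have "- ((G (z s2) - G (z s1)) \<bullet> (y-x)) \<le> norm (G (z s2) - G (z s1)) * norm (y - x)"
      by (metis Cauchy_Schwarz_ineq2 abs_le_iff)
    also have "\<dots> \<le> L * ((s2 - s1) * norm (y - x)) * norm (y-x)"
      using n by (simp add: mult_right_mono)
    finally have a: "- ((G (z s2) - G (z s1)) \<bullet> (y-x)) \<le> L * (s2 - s1) * (norm (y-x))\<^sup>2"
      by (simp add: power2_eq_square mult.assoc)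
    have b: "z s2 \<bullet> (y-x) - z s1 \<bullet> (y-x) = (s2 - s1) * (norm (y-x))\<^sup>2"
      by (simp add: z_def algebra_simps power2_norm_eq_inner)
    have "g' s2 - g' s1 = (G (z s2) - G (z s1)) \<bullet> (y-x) + L * (z s2 \<bullet> (y-x) - z s1 \<bullet> (y-x))"
      by (simp add: g'_def algebra_simps)
    then have "g' s2 - g' s1 = (G (z s2) - G (z s1)) \<bullet> (y-x) + L * (s2 - s1) * (norm (y-x))\<^sup>2"
      using b by simp
    then show ?thesis using a by linarith
  qed
  have cg: "convex_on UNIV g"
    by (rule convex_on_realI[where f'=g']) (auto intro: gd mono)
  have "g ((1-t) *\<^sub>R 0 + t *\<^sub>R 1) \<le> (1-t) * g 0 + t * g 1"
    using convex_onD[OF cg, of t 0 1] t by simp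
  moreover have "z t = (1 - t) *\<^sub>R x + t *\<^sub>R y" by (simp add: z_def algebra_simps)
  ultimately show "f ((1 - t) *\<^sub>R x + t *\<^sub>R y) + L / 2 * (norm ((1 - t) *\<^sub>R x + t *\<^sub>R y))\<^sup>2
       \<le> (1 - t) * (f x + L / 2 * (norm x)\<^sup>2) + t * (f y + L / 2 * (norm y)\<^sup>2)"
    by (simp add: g_def z_def power2_norm_eq_inner)
qed simp

definition sq :: "real \<Rightarrow> 'a::real_inner \<Rightarrow> real" where
  "sq e x = sqrt (x \<bullet> x + e)"

lemma sq_basic:
  fixes x :: "'a::real_inner"
  assumes "e > 0"
  shows "sq e x \<ge> sqrt e" "sq e x > 0" "norm x \<le> sq e x" "(sq e x)\<^sup>2 = x \<bullet> x + e"
    "sq e x = norm (x, sqrt e)"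
proof -
  have p: "x \<bullet> x \<ge> 0" by simp
  show "sq e x \<ge> sqrt e" unfolding sq_def using p by simp
  then show "sq e x > 0" using assms by (meson less_le_trans real_sqrt_gt_0_iff)
  show "norm x \<le> sq e x" unfolding sq_def norm_eq_sqrt_inner using assms by simp
  show "(sq e x)\<^sup>2 = x \<bullet> x + e" unfolding sq_def using p assms by simp
  show "sq e x = norm (x, sqrt e)" unfolding sq_def norm_Pair using assms
    by (simp add: power2_norm_eq_inner)
qed

lemma sq_lip:
  fixes x y :: "'a::real_inner"
  assumes "e > 0"
  shows "\<bar>sq e x - sq e y\<bar> \<le> norm (x - y)"
proof -
  have "\<bar>norm (x, sqrt e) - norm (y, sqrt e)\<bar> \<le> norm ((x, sqrt e) - (y, sqrt e))"
    by (rule norm_triangle_ineq3)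
  also have "\<dots> = norm (x - y)" by (simp add: norm_Pair)
  finally show ?thesis using sq_basic(5)[OF assms] by metis
qed

lemma inv_sq_lip:
  fixes x y :: "'a::real_inner"
  assumes "e > 0"
  shows "\<bar>1 / sq e x - 1 / sq e y\<bar> \<le> norm (x - y) / e"
proof -
  have a: "sq e x > 0" "sq e y > 0" "sq e x \<ge> sqrt e" "sq e y \<ge> sqrt e"
    using sq_basic[OF assms] by auto
  have "sqrt e * sqrt e \<le> sq e x * sq e y" using a assms by (intro mult_mono) auto
  then have e: "e \<le> sq e x * sq e y" using assms by simp
  have "\<bar>1 / sq e x - 1 / sq e y\<bar> = \<bar>sq e x - sq e y\<bar> / (sq e x * sq e y)"
    using a by (simp add: field_simps abs_div)
  also have "\<dots> \<le> norm (x - y) / (sq e x * sq e y)"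
    using a sq_lip[OF assms, of x y] by (intro divide_right_mono) auto
  also have "\<dots> \<le> norm (x - y) / e"
    using e assms by (intro divide_left_mono) auto
  finally show ?thesis .
qed

lemma unit_lip:
  fixes x y :: "'a::real_inner"
  assumes "e > 0"
  shows "norm (x /\<^sub>R sq e x - y /\<^sub>R sq e y) \<le> 2 / sqrt e * norm (x - y)"
proof -
  define a b where "a = sq e x" and "b = sq e y"
  have a: "a > 0" "b > 0" "a \<ge> sqrt e" "norm y \<le> b" "\<bar>a - b\<bar> \<le> norm (x - y)"
    using sq_basic[OF assms] sq_lip[OF assms] by (auto simp: a_def b_def)
  have eq: "x /\<^sub>R a - y /\<^sub>R b = (x - y) /\<^sub>R a + ((b - a) / (a * b)) *\<^sub>R y"
  proof -
    have c: "(b - a)/(a*b) = inverse a - inverse b" using a by (simp add: field_simps)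
    show ?thesis unfolding c by (simp add: scaleR_diff_left scaleR_diff_right algebra_simps)
  qed
  have "norm (x /\<^sub>R a - y /\<^sub>R b) \<le> norm (x - y) / a + \<bar>b - a\<bar> / (a * b) * norm y"
  proof -
    have "norm ((x - y) /\<^sub>R a + ((b - a) / (a * b)) *\<^sub>R y) \<le> norm ((x - y) /\<^sub>R a) + norm (((b - a) / (a * b)) *\<^sub>R y)"
      by (rule norm_triangle_ineq)
    also have "norm ((x - y) /\<^sub>R a) = norm (x - y) / a" using a by (simp add: divide_inverse_commute)
    also have "norm (((b - a) / (a * b)) *\<^sub>R y) = \<bar>b - a\<bar> / (a * b) * norm y" using a by (simp add: abs_div)
    finally show ?thesis unfolding eq by simp
  qed
  also have "\<bar>b - a\<bar> / (a * b) * norm y \<le> \<bar>b - a\<bar> / a"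
  proof -
    have "\<bar>b - a\<bar> / (a * b) * norm y \<le> \<bar>b - a\<bar> / (a * b) * b"
      using a by (intro mult_left_mono) auto
    also have "\<dots> = \<bar>b - a\<bar> / a" using a by simp
    finally show ?thesis .
  qed
  also have "\<bar>b - a\<bar> / a \<le> norm (x - y) / a" using a by (simp add: abs_minus_commute divide_right_mono)
  also have "norm (x - y) / a + norm (x - y) / a = 2 * norm (x - y) / a" by simp
  also have "\<dots> \<le> 2 * norm (x - y) / sqrt e" using a assms by (intro divide_left_mono) auto
  finally show ?thesis unfolding a_def b_def by simp
qed

definition grad :: "real \<Rightarrow> real \<Rightarrow> real \<Rightarrow> 'a::real_inner \<Rightarrow> 'a" where
  "grad k l e x = (k - k * l * (1 / sq e x)) *\<^sub>R x"
lemma p_deriv: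
  fixes x :: "'a::real_inner"
  assumes "e > 0"
  shows "((\<lambda>d. k / 2 * (sqrt (d \<bullet> d + e) - l)\<^sup>2) has_derivative (\<lambda>h. grad k l e x \<bullet> h)) (at x)"
proof -
  have p: "x \<bullet> x + e > 0" using assms by (simp add: add_nonneg_pos)
  have s: "sqrt (x \<bullet> x + e) > 0" using p by simp
  show ?thesis unfolding grad_def sq_def
    apply (rule has_derivative_eq_rhs)
     apply (rule derivative_eq_intros refl p)+
    apply (rule ext)
    using s by (simp add: field_simps inner_commute power2_eq_square)
qed
definition hess :: "real \<Rightarrow> real \<Rightarrow> real \<Rightarrow> 'a::real_inner \<Rightarrow> 'a \<Rightarrow> 'a" where
  "hess k l e x h = (k - k * l * (1 / sq e x)) *\<^sub>R h + (k * l * (1 / sq e x)^3 * (x \<bullet> h)) *\<^sub>R x"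

lemma grad_deriv:
  fixes x :: "'a::real_inner"
  assumes "e > 0"
  shows "(grad k l e has_derivative hess k l e x) (at x)"
proof -
  have p: "x \<bullet> x + e > 0" using assms by (simp add: add_nonneg_pos)
  have s: "sqrt (x \<bullet> x + e) > 0" using p by simp
  have sn: "sqrt (x \<bullet> x + e) \<noteq> 0" using s by simp
  have c: "- 1 * (inverse (sqrt (x \<bullet> x + e)) * ((x \<bullet> h + h \<bullet> x + 0) * (inverse (sqrt (x \<bullet> x + e)) / 2)) *
           inverse (sqrt (x \<bullet> x + e))) + 0 / sqrt (x \<bullet> x + e) = - ((1 / sqrt (x \<bullet> x + e)) ^ 3 * (x \<bullet> h))" for h
    using s by (simp add: field_simps inner_commute power3_eq_cube)
  show ?thesis unfolding grad_def[abs_def] hess_def[abs_def] sq_def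
    apply (rule has_derivative_eq_rhs)
     apply (rule derivative_eq_intros refl p sn)+
    apply (rule ext)
    apply (simp only: c)
    apply (simp add: algebra_simps)
    done
qed

lemma hess_bl:
  fixes x :: "'a::real_inner"
  shows "bounded_linear (hess k l e x)"
  unfolding hess_def[abs_def]
  apply (rule bounded_linear_add)
   apply (rule bounded_linear_scaleR_right)
  apply (rule bounded_linear_compose[OF bounded_linear_scaleR_left])
  apply (rule bounded_linear_compose[OF bounded_linear_mult_right])
  apply (rule bounded_linear_inner_right)
  done
lemma grad_lip:
  assumes "e > 0" "k \<ge> 0" "l \<ge> 0"
  shows "(k + k * l * (2 / sqrt e))-lipschitz_on UNIV (grad k l e :: 'a::real_inner \<Rightarrow> 'a)"
proof (rule lipschitz_onI)
  show "0 \<le> k + k * l * (2 / sqrt e)" using assms by simp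
  fix x y :: 'a
  have eq: "grad k l e x - grad k l e y = k *\<^sub>R (x - y) - (k * l) *\<^sub>R (x /\<^sub>R sq e x - y /\<^sub>R sq e y)"
    unfolding grad_def by (simp add: algebra_simps divide_inverse)
  have "norm (grad k l e x - grad k l e y) \<le> norm (k *\<^sub>R (x - y)) + norm ((k * l) *\<^sub>R (x /\<^sub>R sq e x - y /\<^sub>R sq e y))"
    unfolding eq by (rule norm_triangle_ineq4)
  also have "\<dots> = k * norm (x - y) + k * l * norm (x /\<^sub>R sq e x - y /\<^sub>R sq e y)"
    using assms by simp
  also have "\<dots> \<le> k * norm (x - y) + k * l * (2 / sqrt e * norm (x - y))"
    using assms unit_lip[OF assms(1), of x y] by (intro add_left_mono mult_left_mono) auto
  finally show "dist (grad k l e x) (grad k l e y) \<le> (k + k * l * (2 / sqrt e)) * dist x y"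
    by (simp add: dist_norm algebra_simps)
qed

lemma vec_bound:
  fixes x y h :: "'a::real_inner"
  assumes "norm x \<le> R" "norm y \<le> R"
  shows "norm ((a * (x \<bullet> h)) *\<^sub>R x - (b * (y \<bullet> h)) *\<^sub>R y)
     \<le> \<bar>a - b\<bar> * R\<^sup>2 * norm h + \<bar>b\<bar> * (2 * R * norm (x - y) * norm h)"
proof -
  have eq: "(a * (x \<bullet> h)) *\<^sub>R x - (b * (y \<bullet> h)) *\<^sub>R y
     = ((a - b) * (x \<bullet> h)) *\<^sub>R x + b *\<^sub>R (((x - y) \<bullet> h) *\<^sub>R x + (y \<bullet> h) *\<^sub>R (x - y))"
    by (simp add: algebra_simps inner_diff_left)
  have R: "0 \<le> R" using assms(1) norm_ge_zero order_trans by blast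
  have i1: "norm (((a - b) * (x \<bullet> h)) *\<^sub>R x) \<le> \<bar>a - b\<bar> * R\<^sup>2 * norm h"
  proof -
    have "norm (((a - b) * (x \<bullet> h)) *\<^sub>R x) = \<bar>a - b\<bar> * (\<bar>x \<bullet> h\<bar> * norm x)" by (simp add: abs_mult)
    also have "\<dots> \<le> \<bar>a - b\<bar> * ((norm x * norm h) * norm x)"
      by (intro mult_left_mono mult_right_mono Cauchy_Schwarz_ineq2) auto
    also have "\<dots> \<le> \<bar>a - b\<bar> * ((R * norm h) * R)"
      using assms R by (intro mult_left_mono mult_mono) auto
    finally show ?thesis by (simp add: power2_eq_square algebra_simps)
  qed
  have i2: "norm (((x - y) \<bullet> h) *\<^sub>R x + (y \<bullet> h) *\<^sub>R (x - y)) \<le> 2 * R * norm (x - y) * norm h"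
  proof -
    have "norm (((x - y) \<bullet> h) *\<^sub>R x + (y \<bullet> h) *\<^sub>R (x - y)) \<le> \<bar>(x - y) \<bullet> h\<bar> * norm x + \<bar>y \<bullet> h\<bar> * norm (x - y)"
      by (metis norm_scaleR norm_triangle_ineq real_norm_def)
    also have "\<dots> \<le> (norm (x - y) * norm h) * R + (R * norm h) * norm (x - y)"
      using assms R by (intro add_mono mult_mono Cauchy_Schwarz_ineq2 order_trans[OF Cauchy_Schwarz_ineq2]
          mult_right_mono) auto
    finally show ?thesis by (simp add: algebra_simps)
  qed
  have "norm ((a * (x \<bullet> h)) *\<^sub>R x - (b * (y \<bullet> h)) *\<^sub>R y)
     \<le> norm (((a - b) * (x \<bullet> h)) *\<^sub>R x) + \<bar>b\<bar> * norm (((x - y) \<bullet> h) *\<^sub>R x + (y \<bullet> h) *\<^sub>R (x - y))"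
    unfolding eq by (metis norm_scaleR norm_triangle_ineq real_norm_def)
  also have "\<dots> \<le> \<bar>a - b\<bar> * R\<^sup>2 * norm h + \<bar>b\<bar> * (2 * R * norm (x - y) * norm h)"
    using i1 i2 by (intro add_mono mult_left_mono) auto
  finally show ?thesis .
qed
lemma u_bounds:
  fixes x :: "'a::real_inner"
  assumes "e > 0"
  shows "0 < 1 / sq e x" "1 / sq e x \<le> 1 / sqrt e"
proof -
  show "0 < 1 / sq e x" using sq_basic[OF assms] by simp
  show "1 / sq e x \<le> 1 / sqrt e" using sq_basic[OF assms, of x] assms
    by (intro divide_left_mono) auto
qed

lemma cube_lip:
  fixes x y :: "'a::real_inner"
  assumes "e > 0"
  shows "\<bar>(1 / sq e x)^3 - (1 / sq e y)^3\<bar> \<le> 3 / e * (norm (x - y) / e)"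
proof -
  define u v where "u = 1 / sq e x" and "v = 1 / sq e y"
  have b: "0 < u" "u \<le> 1 / sqrt e" "0 < v" "v \<le> 1 / sqrt e"
    using u_bounds[OF assms] by (auto simp: u_def v_def)
  have d: "\<bar>u - v\<bar> \<le> norm (x - y) / e" using inv_sq_lip[OF assms] by (simp add: u_def v_def)
  have q: "(1 / sqrt e) * (1 / sqrt e) = 1 / e" using assms by (simp add: field_simps)
  have "u * u \<le> (1 / sqrt e) * (1 / sqrt e)" using b assms by (intro mult_mono) auto
  then have uu: "u * u \<le> 1 / e" using q by simp
  have "u * v \<le> (1 / sqrt e) * (1 / sqrt e)" using b assms by (intro mult_mono) auto
  then have uv: "u * v \<le> 1 / e" using q by simp
  have "v * v \<le> (1 / sqrt e) * (1 / sqrt e)" using b assms by (intro mult_mono) auto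
  then have vv: "v * v \<le> 1 / e" using q by simp
  have eq: "u^3 - v^3 = (u - v) * (u * u + u * v + v * v)" by (simp add: algebra_simps power3_eq_cube)
  have pos: "0 \<le> u * u + u * v + v * v" using b by simp
  have "\<bar>u^3 - v^3\<bar> = \<bar>u - v\<bar> * (u * u + u * v + v * v)" unfolding eq using pos by (simp add: abs_mult)
  also have "\<dots> \<le> (norm (x - y) / e) * (3 / e)"
    using d pos uu uv vv by (intro mult_mono) auto
  finally show ?thesis by (simp add: u_def v_def mult.commute)
qed

lemma hess_lip:
  fixes x0 :: "'a::real_inner"
  assumes "e > 0" "k \<ge> 0" "l \<ge> 0"
  defines "R \<equiv> norm x0 + 1"
  defines "C \<equiv> k * l * (1 / e) + k * l * (3 / e * (1 / e) * R\<^sup>2 + (1 / sqrt e)^3 * (2 * R))"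
  assumes xy: "x \<in> ball x0 1" "y \<in> ball x0 1"
  shows "norm (hess k l e x h - hess k l e y h) \<le> C * norm (x - y) * norm h"
proof -
  have nx: "norm x \<le> R" "norm y \<le> R" using xy unfolding R_def
  proof -
    have a: "norm x \<le> norm x0 + norm (x - x0)" "norm y \<le> norm x0 + norm (y - x0)"
      using norm_triangle_sub[of x x0] norm_triangle_sub[of y x0] by auto
    have b: "norm (x - x0) < 1" "norm (y - x0) < 1"
      using xy by (auto simp: dist_norm norm_minus_commute)
    show "norm x \<le> norm x0 + 1" "norm y \<le> norm x0 + 1" using a b by linarith+
  qed
  define ux uy where "ux = 1 / sq e x" and "uy = 1 / sq e y"
  have eq: "hess k l e x h - hess k l e y h = (- (k * l * (ux - uy))) *\<^sub>R h
      + (k * l) *\<^sub>R ((ux^3 * (x \<bullet> h)) *\<^sub>R x - (uy^3 * (y \<bullet> h)) *\<^sub>R y)"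
    unfolding hess_def ux_def uy_def by (simp add: algebra_simps)
  have "norm (hess k l e x h - hess k l e y h) \<le> norm ((- (k * l * (ux - uy))) *\<^sub>R h)
      + norm ((k * l) *\<^sub>R ((ux^3 * (x \<bullet> h)) *\<^sub>R x - (uy^3 * (y \<bullet> h)) *\<^sub>R y))"
    unfolding eq by (rule norm_triangle_ineq)
  also have "\<dots> = k * l * \<bar>ux - uy\<bar> * norm h + k * l * norm ((ux^3 * (x \<bullet> h)) *\<^sub>R x - (uy^3 * (y \<bullet> h)) *\<^sub>R y)"
    using assms by (simp add: abs_mult)
  also have "\<dots> \<le> k * l * (norm (x - y) / e) * norm h
      + k * l * (\<bar>ux^3 - uy^3\<bar> * R\<^sup>2 * norm h + \<bar>uy^3\<bar> * (2 * R * norm (x - y) * norm h))"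
    using assms inv_sq_lip[OF assms(1), of x y] vec_bound[OF nx, of "ux^3" h "uy^3"]
    by (intro add_mono mult_left_mono mult_right_mono) (auto simp: ux_def uy_def)
  also have "\<dots> \<le> k * l * (norm (x - y) / e) * norm h
      + k * l * ((3 / e * (norm (x - y) / e)) * R\<^sup>2 * norm h + (1 / sqrt e)^3 * (2 * R * norm (x - y) * norm h))"
  proof -
    have u3: "\<bar>uy^3\<bar> \<le> (1 / sqrt e)^3" using u_bounds[OF assms(1), of y] unfolding uy_def
      by (simp add: power_mono)
    have R0: "0 \<le> R" unfolding R_def by simp
    show ?thesis
      using assms cube_lip[OF assms(1), of x y] u3 R0
      by (intro add_mono order_refl mult_left_mono mult_right_mono) (auto simp: ux_def uy_def)
  qed
  also have "\<dots> = C * norm (x - y) * norm h" unfolding C_def by (simp add: algebra_simps)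
  finally show ?thesis .
qed

theorem corollary5:
  fixes k l eps :: real
  assumes "k > 0" and "l \<ge> 0" and "eps > 0"
  shows "(\<forall>d. mass_spring k l eps d \<ge> 0) \<and>
         C2_loclip (mass_spring k l eps) \<and>
         (\<exists>L. curvature_bounded L (mass_spring k l eps))"
proof (intro conjI)
  have ms: "mass_spring k l eps = (\<lambda>d. k / 2 * (sqrt (d \<bullet> d + eps) - l)\<^sup>2)"
    by (simp add: mass_spring_def[abs_def])
  show "\<forall>d. mass_spring k l eps d \<ge> 0" using assms by (simp add: mass_spring_def)
  have pd: "\<And>x. (mass_spring k l eps has_derivative (\<lambda>h. grad k l eps x \<bullet> h)) (at x)"
    unfolding ms by (rule p_deriv[OF assms(3)])
  show "\<exists>L. curvature_bounded L (mass_spring k l eps)"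
  proof (intro exI)
    have lip: "(k + k * l * (2 / sqrt eps))-lipschitz_on UNIV (grad k l eps :: real^3 \<Rightarrow> real^3)"
      using grad_lip[OF assms(3) less_imp_le[OF assms(1)] assms(2)] .
    show "curvature_bounded (k + k * l * (2 / sqrt eps)) (mass_spring k l eps)"
      unfolding curvature_bounded_def
      using convex_lip_grad[OF pd lip] pd lip by blast
  qed
  show "C2_loclip (mass_spring k l eps)"
    unfolding C2_loclip_def
  proof (intro exI[where x="grad k l eps"] exI[where x="\<lambda>x. Blinfun (hess k l eps x)"] conjI allI)
    fix x :: "real^3"
    show "(mass_spring k l eps has_derivative (\<bullet>) (grad k l eps x)) (at x)" using pd by simp
    show "(grad k l eps has_derivative blinfun_apply (Blinfun (hess k l eps x))) (at x)"
      using grad_deriv[OF assms(3)] by (simp add: bounded_linear_Blinfun_apply[OF hess_bl])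
    define C where "C = k * l * (1 / eps) + k * l * (3 / eps * (1 / eps) * (norm x + 1)\<^sup>2
       + (1 / sqrt eps)^3 * (2 * (norm x + 1)))"
    have C0: "0 \<le> C" unfolding C_def using assms by simp
    have "C-lipschitz_on (ball x 1) (\<lambda>x. Blinfun (hess k l eps x))"
    proof (rule lipschitz_onI)
      fix y z assume yz: "y \<in> ball x 1" "z \<in> ball x 1"
      have "norm (Blinfun (hess k l eps y) - Blinfun (hess k l eps z)) \<le> C * norm (y - z)"
      proof (rule norm_blinfun_bound)
        show "0 \<le> C * norm (y - z)" using C0 by simp
        fix h
        show "norm (blinfun_apply (Blinfun (hess k l eps y) - Blinfun (hess k l eps z)) h) \<le> C * norm (y - z) * norm h"
          using hess_lip[OF assms(3) _ assms(2) yz, of k h] assms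
          by (simp add: blinfun.diff_left bounded_linear_Blinfun_apply[OF hess_bl] C_def)
      qed
      then show "dist (Blinfun (hess k l eps y)) (Blinfun (hess k l eps z)) \<le> C * dist y z"
        by (simp add: dist_norm)
    qed (rule C0)
    then show "\<exists>e>0. \<exists>C. C-lipschitz_on (ball x e) (\<lambda>x. Blinfun (hess k l eps x))"
      by (intro exI[of _ 1]) auto
  qed
qed
end
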